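(* Let $F:\mathbb{R}^d\to\mathbb{R}^d$ be $L$-Lipschitz, let $G:\mathbb{R}^d\rightrightarrows\mathbb{R}^d$ be maximally monotone, and assume the problem of finding $x$ with $0\in F(x)+G(x)$ has a nonempty solution set. Assume $F+G$ is maximally $\rho$-cohypomonotone for some $\rho>0$. Let $\eta<\frac{1}{L}$ and suppose $\rho<\eta$. Let $(x_k)$ be generated by the inexact Halpern iteration described in the context, and let $x^\star$ be a solution. Then for any $k=1,\dots,K$, $$\frac{1}{\eta^2}\|x_k-J_{\eta(F+G)}(x_k)\|^2\le\frac{16\|x_0-x^\star\|^2}{(\eta-\rho)^2(k+1)^2}.$$ Moreover, the number of first-order oracle calls used at iteration $k$ is at most $2N_k$, where $N_k=\left\lceil\frac{4(1+\eta L)}{1-\eta L}\log\big(98\sqrt{k+2}\,\log(k+2)\big)\right\rceil$.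
   Context: For an operator $A$, $J_A=(\mathrm{Id}+A)^{-1}$ denotes its resolvent. $F+G$ is $\rho$-cohypomonotone if $\langle u-v,x-y\rangle\ge-\rho\|u-v\|^2$ for all $(x,u),(y,v)$ in the graph of $F+G$; maximal means its graph is not strictly contained in the graph of another $\rho$-cohypomonotone operator. A first-order oracle call consists of one evaluation of $F$ and one resolvent evaluation of (a positive multiple of) $G$. Subroutine FBF$(z_0,N,A,B_{\mathrm{in}},L_B)$: set $\tau=\frac{1}{2L_B}$ and $B(\cdot)=B_{\mathrm{in}}(\cdot)-z_0$; for $t=0,\dots,N-1$: $z_{t+1/2}=J_{\tau A}(z_t-\tau B(z_t))$, $z_{t+1}=z_{t+1/2}+\tau B(z_t)-\tau B(z_{t+1/2})$; output $z_N$. Inexact Halpern iteration: given $x_0\in\mathbb{R}^d$, $K\ge1$, set $\beta_k=\frac{1}{k+2}$, $\alpha=1-\frac{\rho}{\eta}$. For $k=0,\dots,K-1$: $\widetilde J_{\eta(F+G)}(x_k)=\mathrm{FBF}(x_k,N_k,\eta G,\mathrm{Id}+\eta F,1+\eta L)$ with $N_k=\left\lceil\frac{4(1+\eta L)}{1-\eta L}\log(98\sqrt{k+2}\log(k+2))\right\rceil$, and $x_{k+1}=\beta_kx_0+(1-\beta_k)\big((1-\alpha)x_k+\alpha\widetilde J_{\eta(F+G)}(x_k)\big)$. *)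

theory Defs
  imports "HOL-Analysis.Analysis"
begin

definition op_graph :: "('a \<Rightarrow> 'a set) \<Rightarrow> ('a \<times> 'a) set" where
  "op_graph A = {(x, u). u \<in> A x}"

definition op_sum :: "('a::real_vector \<Rightarrow> 'a) \<Rightarrow> ('a \<Rightarrow> 'a set) \<Rightarrow> 'a \<Rightarrow> 'a set" where
  "op_sum F G = (\<lambda>x. (\<lambda>v. F x + v) ` G x)"

definition op_scale :: "real \<Rightarrow> ('a::real_vector \<Rightarrow> 'a set) \<Rightarrow> 'a \<Rightarrow> 'a set" where
  "op_scale c A = (\<lambda>x. (\<lambda>v. c *\<^sub>R v) ` A x)"

text \<open>Resolvent J_A = (Id + A)^{-1}, as a function: J_A x is the z with x \<in> z + A z.\<close>
definition resolvent :: "('a::real_vector \<Rightarrow> 'a set) \<Rightarrow> 'a \<Rightarrow> 'a" where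
  "resolvent A x = (THE z. x - z \<in> A z)"

definition monotone_op :: "('a::real_inner \<Rightarrow> 'a set) \<Rightarrow> bool" where
  "monotone_op A \<longleftrightarrow>
     (\<forall>x u y v. (x, u) \<in> op_graph A \<longrightarrow> (y, v) \<in> op_graph A \<longrightarrow> inner (u - v) (x - y) \<ge> 0)"

definition maximal_monotone :: "('a::real_inner \<Rightarrow> 'a set) \<Rightarrow> bool" where
  "maximal_monotone A \<longleftrightarrow> monotone_op A \<and>
     (\<forall>B. monotone_op B \<and> op_graph A \<subseteq> op_graph B \<longrightarrow> op_graph B = op_graph A)"

definition cohypomonotone :: "real \<Rightarrow> ('a::real_inner \<Rightarrow> 'a set) \<Rightarrow> bool" where
  "cohypomonotone \<rho> A \<longleftrightarrow>
     (\<forall>x u y v. (x, u) \<in> op_graph A \<longrightarrow> (y, v) \<in> op_graph A \<longrightarrow>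
        inner (u - v) (x - y) \<ge> - \<rho> * (norm (u - v))\<^sup>2)"

definition maximal_cohypomonotone :: "real \<Rightarrow> ('a::real_inner \<Rightarrow> 'a set) \<Rightarrow> bool" where
  "maximal_cohypomonotone \<rho> A \<longleftrightarrow> cohypomonotone \<rho> A \<and>
     (\<forall>B. cohypomonotone \<rho> B \<and> op_graph A \<subseteq> op_graph B \<longrightarrow> op_graph B = op_graph A)"

text \<open>One FBF step, instrumented with counters (number of evaluations of B_in,
  i.e. of F, and number of resolvent evaluations).  State: (z_t, #F, #J).\<close>
definition fbf_step ::
  "('a::real_vector \<Rightarrow> 'a set) \<Rightarrow> ('a \<Rightarrow> 'a) \<Rightarrow> real \<Rightarrow> 'a \<Rightarrow> 'a \<times> nat \<times> nat \<Rightarrow> 'a \<times> nat \<times> nat" where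
  "fbf_step A Bin LB z0 s =
     (let \<tau> = 1 / (2 * LB);
          B = (\<lambda>w. Bin w - z0);
          (z, nF, nJ) = s;
          Bz = B z;                                  \<comment> \<open>one evaluation of B_in\<close>
          zh = resolvent (op_scale \<tau> A) (z - \<tau> *\<^sub>R Bz);  \<comment> \<open>one resolvent evaluation\<close>
          Bzh = B zh                                 \<comment> \<open>one evaluation of B_in\<close>
      in (zh + \<tau> *\<^sub>R Bz - \<tau> *\<^sub>R Bzh, nF + 2, nJ + 1))"

definition fbf ::
  "'a::real_vector \<Rightarrow> nat \<Rightarrow> ('a \<Rightarrow> 'a set) \<Rightarrow> ('a \<Rightarrow> 'a) \<Rightarrow> real \<Rightarrow> 'a \<times> nat \<times> nat" where
  "fbf z0 N A Bin LB = (fbf_step A Bin LB z0 ^^ N) (z0, 0, 0)"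

definition halpern_N :: "real \<Rightarrow> real \<Rightarrow> nat \<Rightarrow> nat" where
  "halpern_N L \<eta> k =
     nat \<lceil>4 * (1 + \<eta> * L) / (1 - \<eta> * L) * ln (98 * sqrt (real k + 2) * ln (real k + 2))\<rceil>"

definition inexact_resolvent ::
  "('a::real_vector \<Rightarrow> 'a) \<Rightarrow> ('a \<Rightarrow> 'a set) \<Rightarrow> real \<Rightarrow> real \<Rightarrow> nat \<Rightarrow> 'a \<Rightarrow> 'a \<times> nat \<times> nat" where
  "inexact_resolvent F G L \<eta> k x =
     fbf x (halpern_N L \<eta> k) (op_scale \<eta> G) (\<lambda>z. z + \<eta> *\<^sub>R F z) (1 + \<eta> * L)"

primrec halpern ::
  "('a::real_vector \<Rightarrow> 'a) \<Rightarrow> ('a \<Rightarrow> 'a set) \<Rightarrow> real \<Rightarrow> real \<Rightarrow> real \<Rightarrow> 'a \<Rightarrow> nat \<Rightarrow> 'a" where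
  "halpern F G L \<eta> \<rho> x0 0 = x0"
| "halpern F G L \<eta> \<rho> x0 (Suc k) =
     (let \<beta> = 1 / (real k + 2);
          \<alpha> = 1 - \<rho> / \<eta>;
          xk = halpern F G L \<eta> \<rho> x0 k;
          Jt = fst (inexact_resolvent F G L \<eta> k xk)
      in \<beta> *\<^sub>R x0 + (1 - \<beta>) *\<^sub>R ((1 - \<alpha>) *\<^sub>R xk + \<alpha> *\<^sub>R Jt))"

end

theory Submission
  imports Defs
begin


lemma df_sym:
  fixes M :: "('a::real_inner \<times> 'a) set" and l :: "'a \<times> 'a \<Rightarrow> real"
  assumes fin: "finite M"
    and mono: "\<And>p q. p\<in>M \<Longrightarrow> q\<in>M \<Longrightarrow> 0 \<le> inner (snd p - snd q) (fst p - fst q)"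
    and lnn: "\<And>p. p \<in> M \<Longrightarrow> 0 \<le> l p"
  shows "0 \<le> (\<Sum>p\<in>M. \<Sum>q\<in>M. l p * l q * inner (snd p) (fst p - fst q))"
proof -
  define Q where "Q = (\<Sum>p\<in>M. \<Sum>q\<in>M. l p * l q * inner (snd p) (fst p - fst q))"
  have Q2: "Q = (\<Sum>p\<in>M. \<Sum>q\<in>M. l p * l q * inner (snd q) (fst q - fst p))"
    unfolding Q_def by (subst sum.swap) (simp add: mult.commute)
  have "2 * Q = (\<Sum>p\<in>M. \<Sum>q\<in>M. l p * l q * inner (snd p - snd q) (fst p - fst q))"
    unfolding mult_2 
    apply (subst (2) Q2) unfolding Q_def
    by (simp add: sum.distrib[symmetric] algebra_simps inner_diff_left inner_diff_right)
  also have "\<dots> \<ge> 0"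
    by (intro sum_nonneg mult_nonneg_nonneg lnn mono) auto
  finally show ?thesis unfolding Q_def by simp
qed

lemma df:
  fixes M :: "('a::euclidean_space \<times> 'a) set"
  assumes fin: "finite M"
    and mono: "\<And>p q. p\<in>M \<Longrightarrow> q\<in>M \<Longrightarrow> 0 \<le> inner (snd p - snd q) (fst p - fst q)"
    and c: "c \<ge> 0"
  shows "\<exists>x. \<forall>p\<in>M. 0 \<le> inner (c *\<^sub>R snd p + x - w) (fst p - x)"
proof (rule ccontr)
  assume neg: "\<not> ?thesis"
  define \<phi> where "\<phi> p x = inner (c *\<^sub>R snd p + x - w) (fst p - x)" for p x
  define \<gamma> where "\<gamma> p x = max 0 (- \<phi> p x)" for p x
  define S where "S x = (\<Sum>p\<in>M. \<gamma> p x)" for x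
  have negx: "\<exists>p\<in>M. \<phi> p x < 0" for x using neg unfolding \<phi>_def by (auto simp: not_le)
  have gnn: "0 \<le> \<gamma> p x" for p x unfolding \<gamma>_def by simp
  have Spos: "S x > 0" for x
  proof -
    obtain p where p: "p \<in> M" "\<phi> p x < 0" using negx by blast
    have "\<gamma> p x \<le> S x" unfolding S_def by (rule member_le_sum[OF p(1)]) (use gnn fin in auto)
    moreover have "\<gamma> p x > 0" using p unfolding \<gamma>_def by simp
    ultimately show ?thesis by simp
  qed
  have Sne: "S x \<noteq> 0" for x using Spos[of x] by simp
  have Mne: "M \<noteq> {}" using negx by blast
  define f where "f x = (\<Sum>p\<in>M. (\<gamma> p x / S x) *\<^sub>R fst p)" for x
  define C where "C = convex hull (fst ` M)"
  have cC: "compact C" unfolding C_def using fin by (simp add: compact_convex_hull finite_imp_compact)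
  have vC: "convex C" unfolding C_def by simp
  have neC: "C \<noteq> {}" unfolding C_def using Mne by simp
  have contphi: "continuous_on UNIV (\<phi> p)" for p unfolding \<phi>_def by (intro continuous_intros)
  have contg: "continuous_on UNIV (\<gamma> p)" for p unfolding \<gamma>_def 
    by (intro continuous_intros contphi)
  have contS: "continuous_on UNIV S" unfolding S_def by (intro continuous_intros contg)
  have contf: "continuous_on C f" unfolding f_def
    by (intro continuous_intros continuous_on_subset[OF contg] continuous_on_subset[OF contS])
       (use Sne in auto)
  have sum1: "(\<Sum>p\<in>M. \<gamma> p x / S x) = 1" for x
    using Spos[of x] unfolding S_def by (simp add: sum_divide_distrib[symmetric])
  have fim: "f \<in> C \<rightarrow> C"
  proof
    fix x assume "x \<in> C"
    show "f x \<in> C" unfolding f_def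
      by (rule convex_sum[OF fin vC sum1]) (auto simp: gnn Spos less_imp_le C_def hull_inc)
  qed
  obtain x where fx: "f x = x" using brouwer[OF cC vC neC contf fim] by blast
  define l where "l p = \<gamma> p x / S x" for p
  have lnn: "0 \<le> l p" for p unfolding l_def using gnn[of p x] Spos[of x] by simp
  have l1: "(\<Sum>p\<in>M. l p) = 1" unfolding l_def by (rule sum1)
  have xeq: "x = (\<Sum>q\<in>M. l q *\<^sub>R fst q)" using fx unfolding f_def l_def by simp
  have A: "(\<Sum>p\<in>M. l p * \<phi> p x) < 0"
  proof -
    have e: "l p * \<phi> p x = - ((\<gamma> p x)^2 / S x)" for p
      unfolding l_def \<gamma>_def by (auto simp: max_def power2_eq_square)
    obtain p where p: "p \<in> M" "\<phi> p x < 0" using negx by blast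
    have "0 < (\<gamma> p x)^2 / S x" using p Spos[of x] unfolding \<gamma>_def by simp
    also have "\<dots> \<le> (\<Sum>p\<in>M. (\<gamma> p x)^2 / S x)"
      by (rule member_le_sum[OF p(1)]) (use fin Spos[of x] in auto)
    finally show ?thesis unfolding e by (simp add: sum_negf)
  qed
  have B: "(\<Sum>p\<in>M. l p * \<phi> p x) \<ge> 0"
  proof -
    have d: "fst p - x = (\<Sum>q\<in>M. l q *\<^sub>R (fst p - fst q))" for p
      by (simp add: scaleR_diff_right sum_subtractf xeq[symmetric] l1 flip: scaleR_sum_left)
    have e1: "(\<Sum>p\<in>M. l p * inner (x - w) (fst p - x)) = 0"
    proof -
      have "(\<Sum>p\<in>M. l p * inner (x - w) (fst p - x)) = inner (x - w) (\<Sum>p\<in>M. l p *\<^sub>R (fst p - x))"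
        by (simp add: inner_sum_right)
      also have "(\<Sum>p\<in>M. l p *\<^sub>R (fst p - x)) = 0"
        by (simp add: scaleR_diff_right sum_subtractf xeq[symmetric] l1 flip: scaleR_sum_left)
      finally show ?thesis by simp
    qed
    have e2: "(\<Sum>p\<in>M. l p * inner (snd p) (fst p - x)) = (\<Sum>p\<in>M. \<Sum>q\<in>M. l p * l q * inner (snd p) (fst p - fst q))"
      by (subst d) (simp add: inner_sum_right sum_distrib_left mult.assoc)
    have "(\<Sum>p\<in>M. l p * \<phi> p x) = c * (\<Sum>p\<in>M. l p * inner (snd p) (fst p - x)) + (\<Sum>p\<in>M. l p * inner (x - w) (fst p - x))"
    proof -
      have "l p * \<phi> p x = c * (l p * inner (snd p) (fst p - x)) + l p * inner (x - w) (fst p - x)" for p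
        unfolding \<phi>_def by (simp add: inner_add_left inner_diff_left algebra_simps)
      then show ?thesis by (simp add: sum.distrib sum_distrib_left)
    qed
    also have "\<dots> \<ge> 0" unfolding e1 e2 using df_sym[OF fin mono lnn] c by simp
    finally show ?thesis .
  qed
  show False using A B by simp
qed


lemma norm_bound_aux:
  fixes x :: "'a::real_inner"
  assumes "0 \<le> inner (a + x) (y - x)"
  shows "norm x \<le> norm a * norm y + norm a + norm y + 1"
proof (rule ccontr)
  define M where "M = norm a * norm y + norm a + norm y"
  assume "\<not> ?thesis"
  hence gt: "norm x > M + 1" unfolding M_def by simp
  have "inner x x \<le> inner a y - inner a x + inner x y"
    using assms by (simp add: inner_add_left inner_diff_right inner_commute algebra_simps)
  also have "\<dots> \<le> norm a * norm y + norm a * norm x + norm x * norm y"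
    using Cauchy_Schwarz_ineq2[of a y] Cauchy_Schwarz_ineq2[of a x] Cauchy_Schwarz_ineq2[of x y]
    by (smt (verit) abs_le_iff)
  also have "\<dots> \<le> M + M * norm x" unfolding M_def by (simp add: algebra_simps)
  finally have 1: "norm x * norm x \<le> M + M * norm x" by (simp add: dot_square_norm power2_eq_square)
  have "M \<ge> 0" unfolding M_def by simp
  moreover have "(M+1) * norm x < norm x * norm x" using gt \<open>M \<ge> 0\<close> by (intro mult_strict_right_mono) auto
  ultimately show False using 1 gt by (smt (verit) distrib_right mult_cancel_right1 mult_le_cancel_left1)
qed

lemma minty:
  fixes G :: "'a::euclidean_space \<Rightarrow> 'a set"
  assumes mm: "maximal_monotone G" and c: "c > 0"
  shows "\<exists>z. w - z \<in> op_scale c G z"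
proof -
  define K where "K p = {x. 0 \<le> inner (c *\<^sub>R snd p + x - w) (fst p - x)}" for p :: "'a\<times>'a"
  have mono: "monotone_op G" using mm unfolding maximal_monotone_def by simp
  have monoP: "0 \<le> inner (snd p - snd q) (fst p - fst q)" if "p \<in> op_graph G" "q \<in> op_graph G" for p q
    using mono that unfolding monotone_op_def by (cases p, cases q) auto
  have "\<exists>x. \<forall>p\<in>op_graph G. x \<in> K p"
  proof (cases "op_graph G = {}")
    case True then show ?thesis by auto
  next
    case False then obtain p0 where p0: "p0 \<in> op_graph G" by blast
    define R where "R = norm (c *\<^sub>R snd p0 - w) * norm (fst p0) + norm (c *\<^sub>R snd p0 - w) + norm (fst p0) + 1"
    have Kb: "K p0 \<subseteq> cball 0 R"
    proof
      fix x assume "x \<in> K p0"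
      hence "0 \<le> inner ((c *\<^sub>R snd p0 - w) + x) (fst p0 - x)" unfolding K_def by (simp add: algebra_simps)
      from norm_bound_aux[OF this] show "x \<in> cball 0 R" unfolding R_def by simp
    qed
    have "cball 0 R \<inter> (\<Inter>p\<in>op_graph G. K p) \<noteq> {}"
    proof (rule compact_imp_fip_image)
      show "compact (cball (0::'a) R)" by simp
      show "closed (K p)" for p unfolding K_def
        by (intro closed_Collect_le continuous_intros)
      fix I' assume I': "finite I'" "I' \<subseteq> op_graph G"
      have "\<exists>x. \<forall>p\<in>insert p0 I'. 0 \<le> inner (c *\<^sub>R snd p + x - w) (fst p - x)"
      proof (rule df)
        show "finite (insert p0 I')" using I' by simp
        show "0 \<le> c" using c by simp
        fix p q assume "p \<in> insert p0 I'" "q \<in> insert p0 I'"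
        then show "0 \<le> inner (snd p - snd q) (fst p - fst q)" using I' p0 monoP by blast
      qed
      then obtain x where x: "\<forall>p\<in>insert p0 I'. 0 \<le> inner (c *\<^sub>R snd p + x - w) (fst p - x)" by blast
      have "x \<in> K p0" using x unfolding K_def by auto
      with Kb have "x \<in> cball 0 R" by auto
      moreover have "x \<in> (\<Inter>p\<in>I'. K p)" using x unfolding K_def by auto
      ultimately show "cball 0 R \<inter> (\<Inter>p\<in>I'. K p) \<noteq> {}" by blast
    qed
    then show ?thesis by blast
  qed
  then obtain x where x: "\<forall>p\<in>op_graph G. x \<in> K p" by blast
  define u where "u = (1/c) *\<^sub>R (w - x)"
  have cu: "c *\<^sub>R u = w - x" unfolding u_def using c by simp
  define B where "B z = (if z = x then insert u (G z) else G z)" for z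
  have key: "0 \<le> inner (u - v) (x - y)" if "(y, v) \<in> op_graph G" for y v
  proof -
    have "0 \<le> inner (c *\<^sub>R v + x - w) (y - x)" using x that unfolding K_def by auto
    also have "c *\<^sub>R v + x - w = c *\<^sub>R (v - u)" using cu by (simp add: algebra_simps)
    finally have "0 \<le> c * inner (v - u) (y - x)" by simp
    hence "0 \<le> inner (v - u) (y - x)" using c by (simp add: zero_le_mult_iff)
    also have "inner (v - u) (y - x) = inner (u - v) (x - y)" by (simp add: algebra_simps inner_diff_left inner_diff_right)
    finally show ?thesis .
  qed
  have gB: "op_graph B = insert (x, u) (op_graph G)"
    unfolding op_graph_def B_def by (auto split: if_splits)
  have "monotone_op B"
    unfolding monotone_op_def gB
  proof (intro allI impI)
    fix x1 u1 y1 v1 assume a: "(x1, u1) \<in> insert (x, u) (op_graph G)" "(y1, v1) \<in> insert (x, u) (op_graph G)"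
    show "0 \<le> inner (u1 - v1) (x1 - y1)"
    proof (cases "(x1,u1) = (x,u)")
      case T1: True
      show ?thesis
      proof (cases "(y1,v1) = (x,u)")
        case True with T1 show ?thesis by simp
      next
        case False with a T1 key show ?thesis by auto
      qed
    next
      case F1: False
      show ?thesis
      proof (cases "(y1,v1) = (x,u)")
        case True 
        with a F1 key[of x1 u1] have "0 \<le> inner (u - u1) (x - x1)" by auto
        also have "inner (u - u1) (x - x1) = inner (u1 - u) (x1 - x)" by (simp add: algebra_simps inner_diff_left inner_diff_right)
        finally show ?thesis using True by simp
      next
        case False with a F1 mono show ?thesis unfolding monotone_op_def by auto
      qed
    qed
  qed
  moreover have "op_graph G \<subseteq> op_graph B" unfolding gB by auto
  ultimately have "op_graph B = op_graph G" using mm unfolding maximal_monotone_def by blast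
  moreover have "(x, u) \<in> op_graph B" by (simp add: gB)
  ultimately have "(x, u) \<in> op_graph G" by simp
  hence "u \<in> G x" unfolding op_graph_def by simp
  hence "w - x \<in> op_scale c G x" unfolding op_scale_def using cu by force
  then show ?thesis by blast
qed


lemma op_scale_mem: "y \<in> op_scale c G z \<longleftrightarrow> (\<exists>v\<in>G z. y = c *\<^sub>R v)"
  by (auto simp: op_scale_def)

lemma op_sum_mem: "y \<in> op_sum F G z \<longleftrightarrow> (\<exists>v\<in>G z. y = F z + v)"
  by (auto simp: op_sum_def)

lemma op_scale_scale: "op_scale a (op_scale b G) = op_scale (a * b) G"
  by (auto simp: op_scale_def image_image fun_eq_iff)

lemma resolvent_G:
  fixes G :: "'a::euclidean_space \<Rightarrow> 'a set"
  assumes mm: "maximal_monotone G" and c: "c > 0"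
  shows "\<exists>v\<in>G (resolvent (op_scale c G) w). w - resolvent (op_scale c G) w = c *\<^sub>R v"
proof -
  have mono: "monotone_op G" using mm unfolding maximal_monotone_def by simp
  obtain z where z: "w - z \<in> op_scale c G z" using minty[OF mm c] by blast
  have "resolvent (op_scale c G) w = z"
    unfolding resolvent_def
  proof (rule the_equality)
    show "w - z \<in> op_scale c G z" by (rule z)
    fix z' assume z': "w - z' \<in> op_scale c G z'"
    obtain v where v: "v \<in> G z" "w - z = c *\<^sub>R v" using z by (auto simp: op_scale_mem)
    obtain v' where v': "v' \<in> G z'" "w - z' = c *\<^sub>R v'" using z' by (auto simp: op_scale_mem)
    have "0 \<le> inner (v' - v) (z' - z)" using mono v v' unfolding monotone_op_def op_graph_def by auto
    also have "z' - z = - c *\<^sub>R (v' - v)" using v v' by (simp add: algebra_simps)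
    finally have "0 \<le> - c * inner (v' - v) (v' - v)" by simp
    hence "inner (v' - v) (v' - v) \<le> 0" using c by (simp add: mult_le_0_iff)
    hence "v' = v" by (metis inner_ge_zero order_antisym inner_eq_zero_iff eq_iff_diff_eq_0)
    moreover have "z = w - c *\<^sub>R v" "z' = w - c *\<^sub>R v'" using v v' by (auto simp: algebra_simps)
    ultimately show "z' = z" by simp
  qed
  then show ?thesis using z by (auto simp: op_scale_mem)
qed

lemma resolvent_G_nonexp:
  fixes G :: "'a::euclidean_space \<Rightarrow> 'a set"
  assumes mm: "maximal_monotone G" and c: "c > 0"
  shows "norm (resolvent (op_scale c G) a - resolvent (op_scale c G) b) \<le> norm (a - b)"
proof -
  have mono: "monotone_op G" using mm unfolding maximal_monotone_def by simp
  define p where "p = resolvent (op_scale c G) a"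
  define q where "q = resolvent (op_scale c G) b"
  obtain u where u: "u \<in> G p" "a - p = c *\<^sub>R u" using resolvent_G[OF mm c, of a] unfolding p_def by blast
  obtain v where v: "v \<in> G q" "b - q = c *\<^sub>R v" using resolvent_G[OF mm c, of b] unfolding q_def by blast
  have "0 \<le> inner (u - v) (p - q)" using mono u v unfolding monotone_op_def op_graph_def by auto
  hence "0 \<le> c * inner (u - v) (p - q)" using c by simp
  also have "c * inner (u - v) (p - q) = inner ((a - b) - (p - q)) (p - q)"
    using u v by (simp add: algebra_simps inner_diff_left)
  finally have "inner (p - q) (p - q) \<le> inner (a - b) (p - q)" by (simp add: inner_diff_left)
  also have "\<dots> \<le> norm (a - b) * norm (p - q)" by (rule Cauchy_Schwarz_ineq2[THEN abs_le_D1])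
  finally have "norm (p - q) * norm (p - q) \<le> norm (a - b) * norm (p - q)"
    by (simp add: dot_square_norm power2_eq_square)
  then show ?thesis unfolding p_def[symmetric] q_def[symmetric]
    by (cases "norm (p - q) = 0") (auto simp: mult_le_cancel_right)
qed

lemma resolvent_T:
  fixes F :: "'a::euclidean_space \<Rightarrow> 'a" and G :: "'a \<Rightarrow> 'a set"
  assumes mm: "maximal_monotone G" and lip: "L-lipschitz_on UNIV F"
    and eta: "\<eta> > 0" and etaL: "\<eta> * L < 1"
    and ch: "cohypomonotone \<rho> (op_sum F G)" and re: "\<rho> < \<eta>"
  shows "x - resolvent (op_scale \<eta> (op_sum F G)) x \<in> op_scale \<eta> (op_sum F G) (resolvent (op_scale \<eta> (op_sum F G)) x)"
proof -
  have L0: "0 \<le> L" using lip by (rule lipschitz_on_nonneg)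
  define \<Phi> where "\<Phi> z = resolvent (op_scale \<eta> G) (x - \<eta> *\<^sub>R F z)" for z
  have "\<exists>!z. \<Phi> z = z"
  proof (rule banach_fix_type)
    show "0 \<le> \<eta> * L" using eta L0 by simp
    show "\<eta> * L < 1" by (rule etaL)
    show "\<forall>a b. dist (\<Phi> a) (\<Phi> b) \<le> \<eta> * L * dist a b"
    proof (intro allI)
      fix a b
      have "dist (\<Phi> a) (\<Phi> b) \<le> norm ((x - \<eta> *\<^sub>R F a) - (x - \<eta> *\<^sub>R F b))"
        unfolding \<Phi>_def dist_norm by (rule resolvent_G_nonexp[OF mm eta])
      also have "\<dots> = \<eta> * dist (F a) (F b)" using eta
        by (simp add: dist_norm algebra_simps norm_minus_commute flip: scaleR_diff_right)
      also have "\<dots> \<le> \<eta> * (L * dist a b)" using lipschitz_onD[OF lip] eta by (intro mult_left_mono) auto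
      finally show "dist (\<Phi> a) (\<Phi> b) \<le> \<eta> * L * dist a b" by simp
    qed
  qed
  then obtain z where z: "\<Phi> z = z" by blast
  obtain v where v: "v \<in> G z" "x - \<eta> *\<^sub>R F z - z = \<eta> *\<^sub>R v"
    using resolvent_G[OF mm eta, of "x - \<eta> *\<^sub>R F z"] z unfolding \<Phi>_def by auto
  have zmem: "x - z \<in> op_scale \<eta> (op_sum F G) z"
  proof -
    have "F z + v \<in> op_sum F G z" using v(1) by (auto simp: op_sum_mem)
    moreover have "x - z = \<eta> *\<^sub>R (F z + v)" using v(2) by (simp add: algebra_simps)
    ultimately show ?thesis by (auto simp: op_scale_mem)
  qed
  have "resolvent (op_scale \<eta> (op_sum F G)) x = z"
    unfolding resolvent_def
  proof (rule the_equality)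
    show "x - z \<in> op_scale \<eta> (op_sum F G) z" by (rule zmem)
    fix z' assume z': "x - z' \<in> op_scale \<eta> (op_sum F G) z'"
    obtain u where u: "u \<in> op_sum F G z" "x - z = \<eta> *\<^sub>R u" using zmem by (auto simp: op_scale_mem)
    obtain u' where u': "u' \<in> op_sum F G z'" "x - z' = \<eta> *\<^sub>R u'" using z' by (auto simp: op_scale_mem)
    have "- \<rho> * (norm (u' - u))\<^sup>2 \<le> inner (u' - u) (z' - z)"
      using ch u u' unfolding cohypomonotone_def op_graph_def by auto
    also have "z' - z = - \<eta> *\<^sub>R (u' - u)" using u u' by (simp add: algebra_simps)
    finally have "- \<rho> * (norm (u' - u))\<^sup>2 \<le> - \<eta> * (norm (u' - u))\<^sup>2"
      by (simp add: dot_square_norm)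
    hence "(\<eta> - \<rho>) * (norm (u' - u))\<^sup>2 \<le> 0" by (simp add: algebra_simps)
    hence "(norm (u' - u))\<^sup>2 \<le> 0" using re by (simp add: mult_le_0_iff)
    hence "u' = u" by simp
    moreover have "z = x - \<eta> *\<^sub>R u" "z' = x - \<eta> *\<^sub>R u'" using u u' by (auto simp: algebra_simps)
    ultimately show "z' = z" by simp
  qed
  then show ?thesis using zmem by simp
qed


lemma tseng_abstract:
  fixes P H Q d :: "'a::real_inner"
  assumes Qd: "Q = H + d" and dn: "norm d \<le> (1/2) * norm (P - H)"
    and ip: "inner (P - Q) H \<ge> (m/2) * (norm H)^2" and m: "0 < m"
  shows "(1 + 3*m/(m+3)) * (norm Q)^2 \<le> (norm P)^2"
proof -
  have nd2: "(norm d)^2 \<le> (1/4) * (norm (P - H))^2"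
    using dn power_mono[OF dn, of 2] by (simp add: power_mult_distrib power2_eq_square)
  have e1: "(norm Q)^2 = (norm H)^2 + 2 * inner H d + (norm d)^2"
    unfolding Qd by (simp add: power2_norm_eq_inner inner_add_left inner_add_right inner_commute)
  have e2: "(norm P)^2 = (norm (P - H))^2 + 2 * inner (P - H) H + (norm H)^2"
    by (simp add: power2_norm_eq_inner inner_diff_left inner_diff_right inner_commute)
  have e3: "inner (P - Q) H = inner (P - H) H - inner H d"
    unfolding Qd by (simp add: inner_diff_left inner_add_left inner_diff_right inner_add_right inner_commute)
  have s1: "(norm Q)^2 \<le> (norm P)^2 - m * (norm H)^2 - (3/4) * (norm (P - H))^2"
    using e1 e2 e3 ip nd2 by linarith
  define h where "h = norm H"
  define r where "r = norm (P - H)"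
  have nQ: "norm Q \<le> h + r/2" unfolding Qd h_def r_def using norm_triangle_ineq[of H d] dn by linarith
  have h0: "0 \<le> h" "0 \<le> r" unfolding h_def r_def by auto
  have "(norm Q)^2 \<le> (h + r/2)^2" using nQ by (intro power_mono) auto
  hence "(3*m/(m+3)) * (norm Q)^2 \<le> (3*m/(m+3)) * (h + r/2)^2"
    using m by (intro mult_left_mono) auto
  also have "\<dots> \<le> m * h^2 + (3/4) * r^2"
  proof -
    have "(m+3) * (m * h^2 + (3/4) * r^2) - 3*m*(h + r/2)^2 = (m*h - 3/2*r)^2"
      by (simp add: power2_eq_square algebra_simps)
    hence "3*m*(h + r/2)^2 \<le> (m+3) * (m * h^2 + (3/4) * r^2)" by (smt (verit) zero_le_power2)
    thus ?thesis using m by (simp add: divide_le_eq mult.commute)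
  qed
  finally show ?thesis using s1 unfolding h_def r_def by (simp add: algebra_simps)
qed


definition zstep :: "('a::real_vector \<Rightarrow> 'a set) \<Rightarrow> ('a \<Rightarrow> 'a) \<Rightarrow> real \<Rightarrow> 'a \<Rightarrow> 'a \<Rightarrow> 'a" where
  "zstep A Bin LB z0 z = (let \<tau> = 1 / (2 * LB); B = (\<lambda>w. Bin w - z0);
      zh = resolvent (op_scale \<tau> A) (z - \<tau> *\<^sub>R B z) in zh + \<tau> *\<^sub>R B z - \<tau> *\<^sub>R B zh)"

lemma fbf_step_eq: "fbf_step A Bin LB z0 (z, a, b) = (zstep A Bin LB z0 z, a + 2, b + 1)"
  by (simp add: fbf_step_def zstep_def Let_def)

lemma fbf_pow: "(fbf_step A Bin LB z0 ^^ n) (z0, 0, 0) = ((zstep A Bin LB z0 ^^ n) z0, 2 * n, n)"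
  by (induction n) (auto simp: fbf_step_eq)

lemma lip_inner:
  fixes F :: "'a::real_inner \<Rightarrow> 'a"
  assumes lip: "L-lipschitz_on UNIV F"
  shows "inner (F a - F b) (a - b) \<ge> - L * (norm (a - b))^2"
proof -
  have "- inner (F a - F b) (a - b) \<le> norm (F a - F b) * norm (a - b)"
    using Cauchy_Schwarz_ineq2[of "F a - F b" "a - b"] by linarith
  also have "\<dots> \<le> (L * norm (a - b)) * norm (a - b)"
    using lipschitz_onD[OF lip, of a b] by (intro mult_right_mono) (auto simp: dist_norm)
  finally show ?thesis by (simp add: power2_eq_square)
qed

lemma zstep_contr:
  fixes F :: "'a::euclidean_space \<Rightarrow> 'a" and G :: "'a \<Rightarrow> 'a set" and x z :: 'a
  assumes mm: "maximal_monotone G" and lip: "L-lipschitz_on UNIV F"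
    and eta: "\<eta> > 0" and etaL: "\<eta> * L < 1"
    and ch: "cohypomonotone \<rho> (op_sum F G)" and re: "\<rho> < \<eta>"
  defines "J \<equiv> resolvent (op_scale \<eta> (op_sum F G)) x" and "m \<equiv> (1 - \<eta>*L)/(1+\<eta>*L)"
  shows "(1 + 3*m/(m+3)) * (norm (zstep (op_scale \<eta> G) (\<lambda>z. z + \<eta> *\<^sub>R F z) (1+\<eta>*L) x z - J))^2 \<le> (norm (z - J))^2"
proof -
  have L0: "0 \<le> L" using lip by (rule lipschitz_on_nonneg)
  have mono: "monotone_op G" using mm unfolding maximal_monotone_def by simp
  define \<tau> where "\<tau> = 1 / (2 * (1 + \<eta> * L))"
  have tau: "\<tau> > 0" unfolding \<tau>_def using eta L0 by (simp add: add_pos_nonneg)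
  define B where "B w = (w + \<eta> *\<^sub>R F w) - x" for w
  define zh where "zh = resolvent (op_scale (\<tau> * \<eta>) G) (z - \<tau> *\<^sub>R B z)"
  define zn where "zn = zh + \<tau> *\<^sub>R B z - \<tau> *\<^sub>R B zh"
  have zn_eq: "zstep (op_scale \<eta> G) (\<lambda>z. z + \<eta> *\<^sub>R F z) (1+\<eta>*L) x z = zn"
    unfolding zstep_def zn_def zh_def B_def \<tau>_def Let_def op_scale_scale by simp
  obtain vh where vh: "vh \<in> G zh" "z - \<tau> *\<^sub>R B z - zh = (\<tau> * \<eta>) *\<^sub>R vh"
    using resolvent_G[OF mm, of "\<tau> * \<eta>" "z - \<tau> *\<^sub>R B z"] tau eta unfolding zh_def by auto
  have Jm: "x - J \<in> op_scale \<eta> (op_sum F G) J"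
    unfolding J_def by (rule resolvent_T[OF mm lip eta etaL ch re])
  then obtain vs where vs: "vs \<in> G J" "x - J = \<eta> *\<^sub>R (F J + vs)"
    by (auto simp: op_scale_mem op_sum_mem)
  have m0: "0 \<le> inner (vh - vs) (zh - J)" using mono vh vs unfolding monotone_op_def op_graph_def by auto
  have diffeq: "(\<tau> * \<eta>) *\<^sub>R (vh - vs) = (z - zn) - \<tau> *\<^sub>R (B zh - B J)"
  proof -
    have "(\<tau> * \<eta>) *\<^sub>R vs = - \<tau> *\<^sub>R B J" using vs(2) unfolding B_def
      by (simp add: algebra_simps)
    thus ?thesis using vh(2) unfolding zn_def by (simp add: algebra_simps)
  qed
  have "0 \<le> (\<tau> * \<eta>) * inner (vh - vs) (zh - J)" using m0 tau eta by simp
  also have "\<dots> = inner (z - zn) (zh - J) - \<tau> * inner (B zh - B J) (zh - J)"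
    using arg_cong[OF diffeq, of "\<lambda>v. inner v (zh - J)"] by (simp add: inner_diff_left)
  finally have i1: "\<tau> * inner (B zh - B J) (zh - J) \<le> inner (z - zn) (zh - J)" by simp
  have "inner (B zh - B J) (zh - J) = (norm (zh - J))^2 + \<eta> * inner (F zh - F J) (zh - J)"
    unfolding B_def by (simp add: power2_norm_eq_inner algebra_simps inner_diff_left inner_add_left
        flip: scaleR_diff_right)
  also have "\<dots> \<ge> (norm (zh - J))^2 + \<eta> * (- L * (norm (zh - J))^2)"
    using lip_inner[OF lip, of zh J] eta by (intro add_left_mono mult_left_mono) auto
  finally have i2: "(1 - \<eta> * L) * (norm (zh - J))^2 \<le> inner (B zh - B J) (zh - J)" by (simp add: algebra_simps)
  have tm: "\<tau> * (1 - \<eta> * L) = m/2" unfolding \<tau>_def m_def by simp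
  have ip: "inner ((z - J) - (zn - J)) (zh - J) \<ge> (m/2) * (norm (zh - J))^2"
  proof -
    have "(m/2) * (norm (zh - J))^2 = \<tau> * ((1 - \<eta> * L) * (norm (zh - J))^2)" unfolding tm[symmetric] by simp
    also have "\<dots> \<le> \<tau> * inner (B zh - B J) (zh - J)" using i2 tau by (intro mult_left_mono) auto
    also have "\<dots> \<le> inner (z - zn) (zh - J)" by (rule i1)
    finally show ?thesis by simp
  qed
  have dn: "norm (zn - zh) \<le> (1/2) * norm ((z - J) - (zh - J))"
  proof -
    have "zn - zh = \<tau> *\<^sub>R ((z - zh) + \<eta> *\<^sub>R (F z - F zh))" unfolding zn_def B_def
      by (simp add: algebra_simps)
    hence "norm (zn - zh) = \<tau> * norm ((z - zh) + \<eta> *\<^sub>R (F z - F zh))" using tau by simp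
    also have "\<dots> \<le> \<tau> * (norm (z - zh) + \<eta> * (L * norm (z - zh)))"
    proof -
      have "norm ((z - zh) + \<eta> *\<^sub>R (F z - F zh)) \<le> norm (z - zh) + \<eta> * norm (F z - F zh)"
        using norm_triangle_ineq[of "z - zh" "\<eta> *\<^sub>R (F z - F zh)"] eta by simp
      also have "\<dots> \<le> norm (z - zh) + \<eta> * (L * norm (z - zh))"
        using lipschitz_onD[OF lip, of z zh] eta by (intro add_left_mono mult_left_mono) (auto simp: dist_norm)
      finally show ?thesis using tau by (intro mult_left_mono) auto
    qed
    also have "\<dots> = (\<tau> * (1 + \<eta> * L)) * norm (z - zh)" by (simp add: algebra_simps)
    also have "\<tau> * (1 + \<eta> * L) = 1/2"
    proof -
      have "1 + \<eta> * L \<noteq> 0" using eta L0 by (smt (verit) mult_nonneg_nonneg)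
      thus ?thesis unfolding \<tau>_def by simp
    qed
    finally show ?thesis by simp
  qed
  have m0': "0 < m" unfolding m_def using etaL eta L0 by (simp add: add_pos_nonneg)
  have "(1 + 3*m/(m+3)) * (norm (zn - J))^2 \<le> (norm (z - J))^2"
    by (rule tseng_abstract[OF _ dn ip m0']) simp
  then show ?thesis unfolding zn_eq .
qed


lemma lam_exp:
  fixes m :: real assumes m: "0 < m" "m \<le> 1"
  shows "exp (m/2) \<le> 1 + 3*m/(m+3)"
proof -
  have "exp (m/2) \<le> 1 + m/2 + (m/2)^2" using m by (intro exp_bound) auto
  also have "\<dots> \<le> 1 + 3*m/(m+3)"
  proof -
    have "(m/2 + (m/2)^2) * (m+3) \<le> 3*m"
    proof -
      have "(m/2 + (m/2)^2) * (m+3) = m * (m^2 + 5*m + 6) / 4" by (simp add: power2_eq_square field_simps)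
      also have "m^2 + 5*m + 6 \<le> 12" using m by (smt (verit) mult_le_one power2_eq_square)
      hence "m * (m^2 + 5*m + 6) / 4 \<le> m * 12 / 4" using m by (intro divide_right_mono mult_left_mono) auto
      finally show ?thesis by simp
    qed
    thus ?thesis using m by (simp add: le_divide_eq)
  qed
  finally show ?thesis .
qed

lemma fbf_err:
  fixes F :: "'a::euclidean_space \<Rightarrow> 'a" and G :: "'a \<Rightarrow> 'a set" and x :: 'a
  assumes mm: "maximal_monotone G" and lip: "L-lipschitz_on UNIV F"
    and eta: "\<eta> > 0" and etaL: "\<eta> * L < 1"
    and ch: "cohypomonotone \<rho> (op_sum F G)" and re: "\<rho> < \<eta>"
    and N: "real N \<ge> 4 * (1 + \<eta> * L) / (1 - \<eta> * L) * ln R" and R: "R > 0"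
  shows "norm (fst (fbf x N (op_scale \<eta> G) (\<lambda>z. z + \<eta> *\<^sub>R F z) (1 + \<eta> * L))
            - resolvent (op_scale \<eta> (op_sum F G)) x)
         \<le> norm (x - resolvent (op_scale \<eta> (op_sum F G)) x) / R"
proof -
  define J where "J = resolvent (op_scale \<eta> (op_sum F G)) x"
  define m where "m = (1 - \<eta>*L)/(1+\<eta>*L)"
  define q where "q = 1 + 3*m/(m+3)"
  define S where "S = zstep (op_scale \<eta> G) (\<lambda>z. z + \<eta> *\<^sub>R F z) (1+\<eta>*L) x"
  have L0: "0 \<le> L" using lip by (rule lipschitz_on_nonneg)
  have m0: "0 < m" "m \<le> 1" unfolding m_def using etaL eta L0 by (auto simp: add_pos_nonneg divide_le_eq_1)
  have q1: "q \<ge> 1" unfolding q_def using m0 by simp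
  have step: "q * (norm (S z - J))^2 \<le> (norm (z - J))^2" for z
    unfolding q_def S_def J_def m_def by (rule zstep_contr[OF mm lip eta etaL ch re])
  have iter: "q^n * (norm ((S^^n) x - J))^2 \<le> (norm (x - J))^2" for n
  proof (induction n)
    case 0 then show ?case by simp
  next
    case (Suc n)
    have "q^(Suc n) * (norm ((S^^Suc n) x - J))^2 = q^n * (q * (norm (S ((S^^n) x) - J))^2)" by simp
    also have "\<dots> \<le> q^n * (norm ((S^^n) x - J))^2" using step q1 by (intro mult_left_mono) auto
    also have "\<dots> \<le> (norm (x - J))^2" by (rule Suc.IH)
    finally show ?case .
  qed
  have fst_eq: "fst (fbf x N (op_scale \<eta> G) (\<lambda>z. z + \<eta> *\<^sub>R F z) (1 + \<eta> * L)) = (S^^N) x"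
    unfolding fbf_def fbf_pow S_def by simp
  have "R^2 \<le> q^N"
  proof -
    have Nm: "2 * ln R \<le> real N * (m/2)"
    proof -
      have e: "4 * (1 + \<eta> * L) / (1 - \<eta> * L) = 4 / m" unfolding m_def by (rule divide_divide_eq_right[symmetric])
      have "4 / m * ln R \<le> real N" using N unfolding e .
      hence "m * (4 / m * ln R) \<le> m * real N" using m0 by (intro mult_left_mono) auto
      thus ?thesis using m0 by (simp add: mult.commute)
    qed
    have "exp (real 2 * ln R) = exp (ln R) ^ 2" by (rule exp_of_nat_mult)
    hence "R^2 = exp (2 * ln R)" using R by simp
    also have "\<dots> \<le> exp (real N * (m/2))" using Nm by simp
    also have "\<dots> = exp (m/2) ^ N" by (rule exp_of_nat_mult)
    also have "\<dots> \<le> q ^ N" unfolding q_def by (rule power_mono[OF lam_exp[OF m0]]) simp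
    finally show ?thesis .
  qed
  hence "R^2 * (norm ((S^^N) x - J))^2 \<le> q^N * (norm ((S^^N) x - J))^2"
    by (rule mult_right_mono) simp
  hence "R^2 * (norm ((S^^N) x - J))^2 \<le> (norm (x - J))^2"
    using iter[of N] by linarith
  hence "(R * norm ((S^^N) x - J))^2 \<le> (norm (x - J))^2" by (simp add: power_mult_distrib)
  hence "R * norm ((S^^N) x - J) \<le> norm (x - J)" by (rule power2_le_imp_le) simp
  hence "norm ((S^^N) x - J) \<le> norm (x - J) / R" using R by (simp add: le_divide_eq mult.commute)
  then show ?thesis unfolding fst_eq J_def .
qed



lemma pot_real:
  fixes a gw g'w gg g'g g'g' g'e ge ee ng ne :: real
  assumes a: "a > 0"
    and K: "- g'w + gw - a * g'g + a * gg + a * g'e - a * ge \<ge> (a+1) * (g'g' - 2 * g'g + gg)"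
    and N: "g'g' + gg + ee - 2 * g'g - 2 * g'e + 2 * ge \<ge> 0"
    and CS: "ge \<le> ng * ne"
  shows "a*(a+1)*g'g' + 2*a*(g'w - g'g + g'e) \<le> (a-1)*a*gg + 2*a*gw + a*(a+1)*ee + 2*a*ng*ne"
proof -
  have K2: "2*a*(- g'w + gw - a * g'g + a * gg + a * g'e - a * ge) \<ge> 2*a*((a+1) * (g'g' - 2 * g'g + gg))"
    using K a by (intro mult_left_mono) auto
  have N2: "a*(a+1)*(g'g' + gg + ee - 2 * g'g - 2 * g'e + 2 * ge) \<ge> 0"
    using N a by simp
  have C2: "2*a*ge \<le> 2*a*(ng * ne)" using CS a by simp
  show ?thesis using K2 N2 C2 by (simp add: algebra_simps)
qed


lemma halpern_step:
  fixes x0 xk xk1 g g' e :: "'a::real_inner" and a :: real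
  assumes a: "a > 0"
    and upd: "xk1 = (1/(a+1)) *\<^sub>R x0 + (a/(a+1)) *\<^sub>R (xk - g + e)"
    and coco: "inner (g' - g) (xk1 - xk) \<ge> (norm (g' - g))^2"
  shows "a*(a+1)*(norm g')^2 + 2*(a+1)*inner g' (xk1 - x0)
         \<le> (a-1)*a*(norm g)^2 + 2*a*inner g (xk - x0) + a*(a+1)*(norm e)^2 + 2*a*norm g*norm e"
proof -
  define w where "w = xk - x0"
  have a1: "a + 1 \<noteq> 0" using a by simp
  have c1: "(a+1) * (1/(a+1)) = 1" "(a+1) * (a/(a+1)) = a" using a1 by auto
  have X: "(a+1) *\<^sub>R xk1 = x0 + a *\<^sub>R (xk - g + e)"
    unfolding upd scaleR_add_right scaleR_scaleR c1 by simp
  have D1: "(a+1) *\<^sub>R (xk1 - xk) = - w - a *\<^sub>R g + a *\<^sub>R e"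
    unfolding scaleR_diff_right X w_def by (simp add: algebra_simps)
  have D2: "(a+1) *\<^sub>R (xk1 - x0) = a *\<^sub>R (w - g + e)"
    unfolding scaleR_diff_right X w_def by (simp add: algebra_simps)
  have S1: "(a+1) * inner (g' - g) (xk1 - xk) = inner (g' - g) (- w - a *\<^sub>R g + a *\<^sub>R e)"
    using arg_cong[OF D1, of "inner (g' - g)"] by simp
  have S2: "(a+1) * inner g' (xk1 - x0) = a * inner g' (w - g + e)"
    using arg_cong[OF D2, of "inner g'"] by simp
  have K0: "(a+1) * inner (g' - g) (xk1 - xk) \<ge> (a+1) * (norm (g' - g))^2"
    using coco a by (intro mult_left_mono) auto
  have K: "- inner g' w + inner g w - a * inner g' g + a * inner g g + a * inner g' e - a * inner g e
      \<ge> (a+1) * (inner g' g' - 2 * inner g' g + inner g g)"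
    using K0 unfolding S1 by (simp add: inner_diff_left inner_diff_right inner_add_right inner_commute power2_norm_eq_inner algebra_simps)
  have N: "inner g' g' + inner g g + inner e e - 2 * inner g' g - 2 * inner g' e + 2 * inner g e \<ge> 0"
  proof -
    have "0 \<le> inner (g' - g - e) (g' - g - e)" by simp
    thus ?thesis by (simp add: inner_diff_left inner_diff_right inner_commute algebra_simps)
  qed
  have CS: "inner g e \<le> norm g * norm e" by (rule Cauchy_Schwarz_ineq2[THEN abs_le_D1])
  have P: "a*(a+1)*inner g' g' + 2*a*(inner g' w - inner g' g + inner g' e)
     \<le> (a-1)*a*inner g g + 2*a*inner g w + a*(a+1)*inner e e + 2*a*norm g*norm e"
    by (rule pot_real[OF a K N CS])
  have "2*(a+1)*inner g' (xk1 - x0) = 2*a*(inner g' w - inner g' g + inner g' e)"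
  proof -
    have "2*(a+1)*inner g' (xk1 - x0) = 2*((a+1)*inner g' (xk1 - x0))" by simp
    also have "\<dots> = 2*a*(inner g' w - inner g' g + inner g' e)" unfolding S2 by (simp add: inner_diff_right inner_add_right)
    finally show ?thesis .
  qed
  then show ?thesis using P unfolding w_def[symmetric] by (simp add: power2_norm_eq_inner)
qed



lemma sum_inv_sq: "(\<Sum>j<k. 1/(real j + 1)^2) \<le> 2 - 2/(real k + 1)"
proof (induction k)
  case 0 then show ?case by simp
next
  case (Suc k)
  define a where "a = real k + 1"
  have a1: "a \<ge> 1" unfolding a_def by simp
  have "1/a^2 = 2/(2*a*a)" by (simp add: power2_eq_square)
  also have "\<dots> \<le> 2/(a*(a+1))"
  proof (rule frac_le)
    show "0 < a*(a+1)" using a1 by simp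
    show "a*(a+1) \<le> 2*a*a" using a1 by (simp add: algebra_simps power2_eq_square)
  qed auto
  also have "2/(a*(a+1)) = 2/a - 2/(a+1)" using a1 by (simp add: field_simps)
  finally have "1/(real k + 1)^2 \<le> 2/(real k + 1) - 2/(real k + 2)" unfolding a_def by (simp add: add.assoc)
  with Suc show ?case by (simp add: add.commute)
qed

lemma ln_tele:
  fixes n :: real assumes n: "n \<ge> 3"
  shows "1/(n * (ln n)^2) \<le> 1/ln (n-1) - 1/ln n"
proof -
  have l1: "ln (n-1) > 0" using n by simp
  have l2: "ln (n-1) \<le> ln n" using n by simp
  have l3: "ln n > 0" using n by simp
  have "ln ((n-1)/n) \<le> (n-1)/n - 1" using n by (intro ln_le_minus_one) auto
  also have "(n-1)/n - 1 = - 1/n" using n by (simp add: field_simps)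
  finally have d: "1/n \<le> ln n - ln (n-1)" using n by (simp add: ln_div)
  have "1/(n * (ln n)^2) = (1/n) / (ln n * ln n)" by (simp add: power2_eq_square)
  also have "\<dots> \<le> (ln n - ln (n-1)) / (ln n * ln n)" using d l3 by (intro divide_right_mono) auto
  also have "\<dots> \<le> (ln n - ln (n-1)) / (ln (n-1) * ln n)"
    using d l1 l2 l3 n by (intro divide_left_mono mult_right_mono) (auto simp: mult_pos_pos)
  also have "\<dots> = 1/ln (n-1) - 1/ln n" using l1 l3 by (simp add: field_simps)
  finally show ?thesis .
qed

lemma sum_ln_aux: "k \<ge> 1 \<Longrightarrow> (\<Sum>j<k. 1/((real j + 2) * (ln (real j + 2))^2)) \<le> 1/(2*(ln 2)^2) + 1/ln 2 - 1/ln (real k + 1)"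
proof (induction k rule: dec_induct)
  case base then show ?case by simp
next
  case (step k)
  have "1/((real k + 2) * (ln (real k + 2))^2) \<le> 1/ln (real k + 2 - 1) - 1/ln (real k + 2)"
    using step by (intro ln_tele) auto
  hence "1/((real k + 2) * (ln (real k + 2))^2) \<le> 1/ln (real k + 1) - 1/ln (real k + 2)"
    by (simp add: add.commute)
  with step show ?case by (simp add: add.commute add.left_commute)
qed

lemma sum_ln: "(\<Sum>j<k. 1/((real j + 2) * (ln (real j + 2))^2)) \<le> 3"
proof (cases "k \<ge> 1")
  case True
  have l2: "2/3 \<le> ln (2::real)" by (rule ln2_ge_two_thirds)
  have a: "1/ln (2::real) \<le> 3/2" using l2 by (simp add: divide_le_eq)
  have b: "1/(2*(ln (2::real))^2) \<le> 9/8"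
  proof -
    have "(2/3)^2 \<le> (ln (2::real))^2" using l2 by (intro power_mono) auto
    hence "4/9 \<le> (ln (2::real))^2" by (simp add: power2_eq_square)
    thus ?thesis by (simp add: divide_le_eq)
  qed
  have c: "0 \<le> 1/ln (real k + 1)" using True by simp
  show ?thesis using sum_ln_aux[OF True] a b c by linarith
next
  case False then have "k = 0" by simp
  then show ?thesis by simp
qed

lemma sum_t:
  "(\<Sum>j<k. 2*(1/(98 * sqrt (real j + 2) * ln (real j + 2)))^2
           + 2*(1/(98 * sqrt (real j + 2) * ln (real j + 2)))/(real j + 1)) \<le> 1/2"
proof -
  define R where "R j = 98 * sqrt (real j + 2) * ln (real j + 2)" for j :: nat
  have Rsq: "(1 / R j)^2 = (1/9604) * (1/((real j + 2) * (ln (real j + 2))^2))" for j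
    unfolding R_def by (simp add: power_mult_distrib power_divide)
  have young: "2*x*y \<le> 50*x^2 + (1/50)*y^2" for x y :: real
  proof -
    have "0 \<le> (50*x - y)^2" by simp
    thus ?thesis by (simp add: power2_eq_square algebra_simps)
  qed
  have t: "2*(1/R j)^2 + 2*(1/R j)/(real j + 1) \<le> 52*(1/R j)^2 + (1/50) * (1/(real j + 1)^2)" for j
  proof -
    have "2*(1/R j)*(1/(real j+1)) \<le> 50*(1/R j)^2 + (1/50)*(1/(real j+1))^2" by (rule young)
    moreover have "(1/(real j+1))^2 = 1/(real j + 1)^2" by (simp add: power_divide)
    moreover have "2*(1/R j)/(real j + 1) = 2*(1/R j)*(1/(real j+1))" by simp
    ultimately show ?thesis by simp
  qed
  have "(\<Sum>j<k. 2*(1/R j)^2 + 2*(1/R j)/(real j + 1)) \<le> (\<Sum>j<k. 52*(1/R j)^2 + (1/50) * (1/(real j + 1)^2))"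
    by (rule sum_mono) (rule t)
  also have "\<dots> = (52/9604) * (\<Sum>j<k. 1/((real j + 2) * (ln (real j + 2))^2)) + (1/50) * (\<Sum>j<k. 1/(real j + 1)^2)"
    unfolding Rsq by (simp add: sum.distrib sum_distrib_left)
  also have "\<dots> \<le> (52/9604) * 3 + (1/50) * 2"
  proof -
    have "(\<Sum>j<k. 1/(real j + 1)^2) \<le> 2" using sum_inv_sq[of k] by (smt (verit) divide_nonneg_nonneg of_nat_0_le_iff)
    thus ?thesis using sum_ln[of k] by (intro add_mono mult_left_mono) auto
  qed
  also have "\<dots> \<le> 1/2" by simp
  finally show ?thesis unfolding R_def .
qed


lemma resolvent_T_unique:
  fixes F :: "'a::real_inner \<Rightarrow> 'a" and G :: "'a \<Rightarrow> 'a set"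
  assumes ch: "cohypomonotone \<rho> (op_sum F G)" and re: "\<rho> < \<eta>"
    and zmem: "x - z \<in> op_scale \<eta> (op_sum F G) z"
  shows "resolvent (op_scale \<eta> (op_sum F G)) x = z"
  unfolding resolvent_def
proof (rule the_equality)
  show "x - z \<in> op_scale \<eta> (op_sum F G) z" by (rule zmem)
  fix z' assume z': "x - z' \<in> op_scale \<eta> (op_sum F G) z'"
  obtain u where u: "u \<in> op_sum F G z" "x - z = \<eta> *\<^sub>R u" using zmem by (auto simp: op_scale_mem)
  obtain u' where u': "u' \<in> op_sum F G z'" "x - z' = \<eta> *\<^sub>R u'" using z' by (auto simp: op_scale_mem)
  have "- \<rho> * (norm (u' - u))\<^sup>2 \<le> inner (u' - u) (z' - z)"
    using ch u u' unfolding cohypomonotone_def op_graph_def by auto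
  also have "z' - z = - \<eta> *\<^sub>R (u' - u)" using u u' by (simp add: algebra_simps)
  finally have "- \<rho> * (norm (u' - u))\<^sup>2 \<le> - \<eta> * (norm (u' - u))\<^sup>2"
    by (simp add: dot_square_norm)
  hence "(\<eta> - \<rho>) * (norm (u' - u))\<^sup>2 \<le> 0" by (simp add: algebra_simps)
  hence "(norm (u' - u))\<^sup>2 \<le> 0" using re by (simp add: mult_le_0_iff)
  hence "u' = u" by simp
  moreover have "z = x - \<eta> *\<^sub>R u" "z' = x - \<eta> *\<^sub>R u'" using u u' by (auto simp: algebra_simps)
  ultimately show "z' = z" by simp
qed

lemma quad_bound:
  fixes y d :: real
  assumes "0 \<le> y" "0 \<le> d" "y^2 - 2*d*y \<le> 8*d^2"
  shows "y \<le> 4*d"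
proof (rule ccontr)
  assume "\<not> ?thesis"
  hence "0 < y - 4*d" "0 < y + 2*d" using assms by auto
  hence "0 < (y - 4*d) * (y + 2*d)" by simp
  thus False using assms(3) by (simp add: power2_eq_square algebra_simps)
qed

theorem theorem2p1:
  fixes F :: "'a::euclidean_space \<Rightarrow> 'a" and G :: "'a \<Rightarrow> 'a set"
    and L \<eta> \<rho> :: real and x0 xstar :: 'a and K :: nat
  assumes F_lip: "L-lipschitz_on UNIV F"
    and G_mm: "maximal_monotone G"
    and sol_nonempty: "\<exists>x. 0 \<in> op_sum F G x"
    and rho_pos: "\<rho> > 0"
    and cohypo: "maximal_cohypomonotone \<rho> (op_sum F G)"
    and eta_L: "\<eta> * L < 1"
    and rho_eta: "\<rho> < \<eta>"
    and xstar: "0 \<in> op_sum F G xstar"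
    and K: "K \<ge> 1"
  shows "(\<forall>k. 1 \<le> k \<and> k \<le> K \<longrightarrow>
            (1 / \<eta>\<^sup>2) * (norm (halpern F G L \<eta> \<rho> x0 k
                 - resolvent (op_scale \<eta> (op_sum F G)) (halpern F G L \<eta> \<rho> x0 k)))\<^sup>2
            \<le> 16 * (norm (x0 - xstar))\<^sup>2 / ((\<eta> - \<rho>)\<^sup>2 * (real k + 1)\<^sup>2))
       \<and> (\<forall>k < K.
            fst (snd (inexact_resolvent F G L \<eta> k (halpern F G L \<eta> \<rho> x0 k))) \<le> 2 * halpern_N L \<eta> k
          \<and> snd (snd (inexact_resolvent F G L \<eta> k (halpern F G L \<eta> \<rho> x0 k))) \<le> 2 * halpern_N L \<eta> k)"
proof
  have eta: "\<eta> > 0" using rho_pos rho_eta by simp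
  have L0: "0 \<le> L" using F_lip by (rule lipschitz_on_nonneg)
  have ch: "cohypomonotone \<rho> (op_sum F G)" using cohypo unfolding maximal_cohypomonotone_def by simp
  define J where "J x = resolvent (op_scale \<eta> (op_sum F G)) x" for x
  define \<alpha> where "\<alpha> = 1 - \<rho> / \<eta>"
  have ae: "\<alpha> * \<eta> = \<eta> - \<rho>" unfolding \<alpha>_def using eta by (simp add: field_simps)
  have a0: "\<alpha> > 0" unfolding \<alpha>_def using eta rho_eta by simp
  define g where "g x = \<alpha> *\<^sub>R (x - J x)" for x
  have Jmem: "\<exists>u\<in>op_sum F G (J x). x - J x = \<eta> *\<^sub>R u" for x
    using resolvent_T[OF G_mm F_lip eta eta_L ch rho_eta, of x] unfolding J_def by (auto simp: op_scale_mem)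
  have firm: "inner (g x - g y) (x - y) \<ge> (norm (g x - g y))^2" for x y
  proof -
    obtain u where u: "u \<in> op_sum F G (J x)" "x - J x = \<eta> *\<^sub>R u" using Jmem by blast
    obtain v where v: "v \<in> op_sum F G (J y)" "y - J y = \<eta> *\<^sub>R v" using Jmem by blast
    have c: "- \<rho> * (norm (u - v))\<^sup>2 \<le> inner (u - v) (J x - J y)"
      using ch u v unfolding cohypomonotone_def op_graph_def by auto
    have gx: "g x - g y = (\<eta> - \<rho>) *\<^sub>R (u - v)"
    proof -
      have "g x - g y = \<alpha> *\<^sub>R (x - J x) - \<alpha> *\<^sub>R (y - J y)" unfolding g_def by simp
      also have "\<dots> = (\<alpha> * \<eta>) *\<^sub>R (u - v)" unfolding u(2) v(2) by (simp add: scaleR_diff_right)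
      finally show ?thesis unfolding ae .
    qed
    have xy: "x - y = (J x - J y) + \<eta> *\<^sub>R (u - v)" using u v by (simp add: algebra_simps)
    have "inner (g x - g y) (x - y) = (\<eta> - \<rho>) * (inner (u - v) (J x - J y) + \<eta> * (norm (u - v))^2)"
      unfolding gx xy by (simp add: inner_add_right power2_norm_eq_inner algebra_simps)
    also have "\<dots> \<ge> (\<eta> - \<rho>) * ((\<eta> - \<rho>) * (norm (u - v))^2)"
      using c rho_eta by (intro mult_left_mono) (auto simp: algebra_simps)
    finally have i: "(\<eta> - \<rho>) * ((\<eta> - \<rho>) * (norm (u - v))^2) \<le> inner (g x - g y) (x - y)" .
    have ab: "\<bar>\<eta> - \<rho>\<bar> = \<eta> - \<rho>" using rho_eta by simp
    have "(norm (g x - g y))^2 = (\<eta> - \<rho>) * ((\<eta> - \<rho>) * (norm (u - v))^2)"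
      unfolding gx norm_scaleR ab by (simp add: power2_eq_square)
    with i show ?thesis by simp
  qed
  have Jstar: "J xstar = xstar" unfolding J_def
    by (rule resolvent_T_unique[OF ch rho_eta]) (use xstar in \<open>auto simp: op_scale_mem intro: bexI[of _ 0]\<close>)
  have gstar: "g xstar = 0" unfolding g_def Jstar by simp
  have cstar: "inner (g x) (x - xstar) \<ge> (norm (g x))^2" for x
    using firm[of x xstar] unfolding gstar by simp
  define X where "X k = halpern F G L \<eta> \<rho> x0 k" for k
  define Jt where "Jt k = fst (inexact_resolvent F G L \<eta> k (X k))" for k
  define e where "e k = \<alpha> *\<^sub>R (Jt k - J (X k))" for k
  define R where "R k = 98 * sqrt (real k + 2) * ln (real k + 2)" for k :: nat
  have Rpos: "R k > 0" for k unfolding R_def by simp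
  define t where "t j = 2*(1/R j)^2 + 2*(1/R j)/(real j + 1)" for j
  have tnn: "t j \<ge> 0" for j unfolding t_def using Rpos[of j] by simp
  have sumt: "(\<Sum>j<k. t j) \<le> 1/2" for k unfolding t_def R_def by (rule sum_t)
  define D where "D = norm (x0 - xstar)"
  have D0: "D \<ge> 0" unfolding D_def by simp
  have upd: "X (Suc k) = (1/((real k + 1)+1)) *\<^sub>R x0 + ((real k + 1)/((real k + 1)+1)) *\<^sub>R (X k - g (X k) + e k)" for k
  proof -
    have comb: "(1 - \<alpha>) *\<^sub>R X k + \<alpha> *\<^sub>R Jt k = X k - g (X k) + e k"
      unfolding g_def e_def by (simp add: algebra_simps)
    have c2: "1 - 1 / (real k + 2) = (real k + 1)/((real k + 1)+1)" by (simp add: field_simps)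
    have c1: "real k + 2 = (real k + 1) + 1" by simp
    have h: "X (Suc k) = (1/(real k + 2)) *\<^sub>R x0 + (1 - 1/(real k + 2)) *\<^sub>R ((1-\<alpha>) *\<^sub>R X k + \<alpha> *\<^sub>R Jt k)"
      unfolding X_def Jt_def \<alpha>_def by (simp only: halpern.simps Let_def)
    show ?thesis unfolding h comb by (simp only: c2) (simp only: c1)
  qed
  have err: "norm (e k) \<le> norm (g (X k)) / R k" for k
  proof -
    have N: "real (halpern_N L \<eta> k) \<ge> 4 * (1 + \<eta> * L) / (1 - \<eta> * L) * ln (R k)"
      unfolding halpern_N_def R_def by (rule real_nat_ceiling_ge)
    have "norm (Jt k - J (X k)) \<le> norm (X k - J (X k)) / R k"
      unfolding Jt_def inexact_resolvent_def J_def
      by (rule fbf_err[OF G_mm F_lip eta eta_L ch rho_eta N Rpos])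
    hence "\<alpha> * norm (Jt k - J (X k)) \<le> \<alpha> * (norm (X k - J (X k)) / R k)" using a0 by (intro mult_left_mono) auto
    thus ?thesis unfolding e_def g_def using a0 by simp
  qed
  define s where "s k = (real k + 1) * norm (g (X k))" for k
  define V where "V k = real k * (real k + 1) * (norm (g (X k)))^2 + 2 * (real k + 1) * inner (g (X k)) (X k - x0)" for k
  have Vlow: "V k \<ge> (s k)^2 - 2 * D * s k" for k
  proof -
    have "inner (g (X k)) (X k - x0) = inner (g (X k)) (X k - xstar) + inner (g (X k)) (xstar - x0)"
      by (simp add: inner_diff_right)
    also have "\<dots> \<ge> (norm (g (X k)))^2 - norm (g (X k)) * D"
    proof -
      have "- inner (g (X k)) (xstar - x0) \<le> norm (g (X k)) * norm (xstar - x0)"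
        using Cauchy_Schwarz_ineq2[of "g (X k)" "xstar - x0"] by linarith
      moreover have "norm (xstar - x0) = D" unfolding D_def by (simp add: norm_minus_commute)
      ultimately have "- inner (g (X k)) (xstar - x0) \<le> norm (g (X k)) * D" by simp
      then show ?thesis using cstar[of "X k"] by linarith
    qed
    finally have i: "inner (g (X k)) (X k - x0) \<ge> (norm (g (X k)))^2 - norm (g (X k)) * D" .
    have "V k \<ge> real k * (real k + 1) * (norm (g (X k)))^2 + 2 * (real k + 1) * ((norm (g (X k)))^2 - norm (g (X k)) * D)"
      unfolding V_def using i by (intro add_left_mono mult_left_mono) auto
    moreover have "real k * (real k + 1) * (norm (g (X k)))^2 + 2 * (real k + 1) * ((norm (g (X k)))^2 - norm (g (X k)) * D)
        = (real k + 1) * (real k + 2) * (norm (g (X k)))^2 - 2 * D * s k"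
      unfolding s_def by (simp add: algebra_simps)
    moreover have "(s k)^2 \<le> (real k + 1) * (real k + 2) * (norm (g (X k)))^2"
    proof -
      have "(s k)^2 = ((real k + 1) * (real k + 1)) * (norm (g (X k)))^2"
        unfolding s_def by (simp add: power_mult_distrib power2_eq_square)
      also have "\<dots> \<le> ((real k + 1) * (real k + 2)) * (norm (g (X k)))^2"
        by (intro mult_right_mono mult_left_mono) auto
      finally show ?thesis .
    qed
    ultimately show ?thesis by linarith
  qed
  have Vstep: "V (Suc k) \<le> V k + t k * (s k)^2" for k
  proof -
    define a where "a = real k + 1"
    have a1: "a \<ge> 1" unfolding a_def by simp
    have hs: "a*(a+1)*(norm (g (X (Suc k))))^2 + 2*(a+1)*inner (g (X (Suc k))) (X (Suc k) - x0)
         \<le> (a-1)*a*(norm (g (X k)))^2 + 2*a*inner (g (X k)) (X k - x0) + a*(a+1)*(norm (e k))^2 + 2*a*norm (g (X k))*norm (e k)"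
      by (rule halpern_step) (use a1 upd[of k] firm[of "X (Suc k)" "X k"] in \<open>auto simp: a_def\<close>)
    have VS: "V (Suc k) = a*(a+1)*(norm (g (X (Suc k))))^2 + 2*(a+1)*inner (g (X (Suc k))) (X (Suc k) - x0)"
      unfolding V_def a_def by (simp add: algebra_simps)
    have VK: "V k = (a-1)*a*(norm (g (X k)))^2 + 2*a*inner (g (X k)) (X k - x0)"
      unfolding V_def a_def by (simp add: algebra_simps)
    define n where "n = norm (g (X k))"
    define \<epsilon> where "\<epsilon> = 1 / R k"
    have ep: "\<epsilon> > 0" unfolding \<epsilon>_def using Rpos by simp
    have en: "norm (e k) \<le> \<epsilon> * n" using err[of k] unfolding \<epsilon>_def n_def by simp
    have n0: "n \<ge> 0" unfolding n_def by simp
    have "a*(a+1)*(norm (e k))^2 \<le> a*(a+1)*(\<epsilon> * n)^2"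
      using en a1 by (intro mult_left_mono power_mono) auto
    also have "\<dots> \<le> 2*\<epsilon>^2 * (a*n)^2"
    proof -
      have "a*(a+1) \<le> 2*a^2" using a1 by (simp add: power2_eq_square algebra_simps)
      hence "a*(a+1)*(\<epsilon> * n)^2 \<le> 2*a^2*(\<epsilon> * n)^2" by (intro mult_right_mono) auto
      thus ?thesis by (simp add: power_mult_distrib algebra_simps)
    qed
    finally have t1: "a*(a+1)*(norm (e k))^2 \<le> 2*\<epsilon>^2 * (a*n)^2" .
    have "2*a*n*norm (e k) \<le> 2*a*n*(\<epsilon> * n)" using en a1 n0 by (intro mult_left_mono) auto
    also have "\<dots> = 2*\<epsilon>/a * (a*n)^2" using a1 by (simp add: power2_eq_square field_simps)
    finally have t2: "2*a*n*norm (e k) \<le> 2*\<epsilon>/a * (a*n)^2" .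
    have "t k * (s k)^2 = 2*\<epsilon>^2 * (a*n)^2 + 2*\<epsilon>/a * (a*n)^2"
      unfolding t_def s_def \<epsilon>_def a_def n_def by (simp add: algebra_simps)
    then show ?thesis using hs VS VK t1 t2 unfolding n_def by linarith
  qed
  have V0: "V 0 = 0" unfolding V_def X_def by simp
  have inv: "s k \<le> 4 * D \<and> V k \<le> 16 * D^2 * (\<Sum>j<k. t j)" for k
  proof (induction k)
    case 0
    have "0 \<le> D^2" by simp
    hence "(s 0)^2 - 2 * D * s 0 \<le> 8 * D^2" using Vlow[of 0] V0 by linarith
    then show ?case using quad_bound[of "s 0" D] D0 V0 unfolding s_def by simp
  next
    case (Suc k)
    have s0: "0 \<le> s k" unfolding s_def by simp
    have "(s k)^2 \<le> (4*D)^2" using Suc.IH s0 by (intro power_mono) auto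
    hence "t k * (s k)^2 \<le> t k * (16 * D^2)" using tnn by (intro mult_left_mono) (auto simp: power_mult_distrib)
    hence VS: "V (Suc k) \<le> 16 * D^2 * (\<Sum>j<Suc k. t j)"
      using Vstep[of k] Suc.IH by (simp add: algebra_simps)
    have "16 * D^2 * (\<Sum>j<Suc k. t j) \<le> 16 * D^2 * (1/2)" using sumt[of "Suc k"] by (intro mult_left_mono) auto
    hence "(s (Suc k))^2 - 2 * D * s (Suc k) \<le> 8 * D^2" using VS Vlow[of "Suc k"] by linarith
    hence "s (Suc k) \<le> 4 * D" using D0 by (intro quad_bound) (auto simp: s_def)
    then show ?case using VS by simp
  qed
  show "\<forall>k. 1 \<le> k \<and> k \<le> K \<longrightarrow>
            (1 / \<eta>\<^sup>2) * (norm (halpern F G L \<eta> \<rho> x0 k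
                 - resolvent (op_scale \<eta> (op_sum F G)) (halpern F G L \<eta> \<rho> x0 k)))\<^sup>2
            \<le> 16 * (norm (x0 - xstar))\<^sup>2 / ((\<eta> - \<rho>)\<^sup>2 * (real k + 1)\<^sup>2)"
  proof (intro allI impI)
    fix k :: nat
    have sk: "(real k + 1) * norm (g (X k)) \<le> 4 * D" using inv[of k] unfolding s_def by simp
    have ng: "norm (g (X k)) = \<alpha> * norm (X k - J (X k))" unfolding g_def using a0 by simp
    have "((real k + 1) * norm (g (X k)))^2 \<le> (4 * D)^2" using sk by (intro power_mono) auto
    hence "(real k + 1)^2 * (\<alpha> * norm (X k - J (X k)))^2 \<le> 16 * D^2" unfolding ng by (simp add: power_mult_distrib)
    hence "(real k + 1)^2 * ((\<eta> - \<rho>)^2 * ((1 / \<eta>\<^sup>2) * (norm (X k - J (X k)))^2)) \<le> 16 * D^2"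
    proof -
      have "(\<alpha> * norm (X k - J (X k)))^2 = (\<eta> - \<rho>)^2 * ((1 / \<eta>\<^sup>2) * (norm (X k - J (X k)))^2)"
        unfolding ae[symmetric] using eta by (simp add: power_mult_distrib field_simps)
      thus "(real k + 1)^2 * (\<alpha> * norm (X k - J (X k)))^2 \<le> 16 * D^2 \<Longrightarrow> ?thesis" by simp
    qed
    hence "(1 / \<eta>\<^sup>2) * (norm (X k - J (X k)))^2 \<le> 16 * D^2 / ((\<eta> - \<rho>)^2 * (real k + 1)^2)"
      using rho_eta by (simp add: le_divide_eq algebra_simps)
    then show "1 \<le> k \<and> k \<le> K \<Longrightarrow> (1 / \<eta>\<^sup>2) * (norm (halpern F G L \<eta> \<rho> x0 k
                 - resolvent (op_scale \<eta> (op_sum F G)) (halpern F G L \<eta> \<rho> x0 k)))\<^sup>2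
            \<le> 16 * (norm (x0 - xstar))\<^sup>2 / ((\<eta> - \<rho>)\<^sup>2 * (real k + 1)\<^sup>2)"
      unfolding X_def J_def D_def by simp
  qed
next
  show "\<forall>k < K.
            fst (snd (inexact_resolvent F G L \<eta> k (halpern F G L \<eta> \<rho> x0 k))) \<le> 2 * halpern_N L \<eta> k
          \<and> snd (snd (inexact_resolvent F G L \<eta> k (halpern F G L \<eta> \<rho> x0 k))) \<le> 2 * halpern_N L \<eta> k"
    by (simp add: inexact_resolvent_def fbf_def fbf_pow)
qed

end
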